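(* Let $(\mathcal Q,d)$ be a Hadamard space, $Y$ a $\mathcal Q$-valued random variable, $o\in\mathcal Q$, and $\tau\in\mathcal S_0^+$ with $\mathbb E[\tau'(d(Y,o))]<\infty$. Let $m\in\arg\min_{q\in\mathcal Q}\mathbb E[\tau(d(Y,q))-\tau(d(Y,o))]$, let $x_0:=\inf\{x\in(0,\infty):\tau'^{\oplus}(x)=0\}$ (with $\inf\emptyset=\infty$), and assume $\mathbb P(d(Y,m)<x_0)>0$. Let either $\beta:=0$, or $\beta\in[0,1)$ be such that $$\liminf_{x\searrow0}\frac{\tau'^{\oplus}(2x)\,\mathbb P(d(Y,m)\le x)}{x^{-\beta}}>0.$$ Then there are constants $c_1,c_2,c_3,c_4,\delta\in(0,\infty)$ such that (i) for all $q$ with $d(q,m)<\delta$: $c_1 d(q,m)\ge\mathbb E[\tau(d(Y,q))-\tau(d(Y,m))]\ge c_2\, d(q,m)^{2-\beta}$; (ii) for all $q$ with $d(q,m)\ge\delta$: $c_3\tau(d(q,m))\ge\mathbb E[\tau(d(Y,q))-\tau(d(Y,m))]\ge c_4\tau(d(q,m))$.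
   Context: A Hadamard space is a complete metric space $(\mathcal Q,d)$ such that for all $y_0,y_1$ there is $m$ with $\frac12 d(y_0,q)^2+\frac12 d(y_1,q)^2-\frac14 d(y_0,y_1)^2\ge d(q,m)^2$ for all $q$. $\mathcal S_0^+$ is the set of nondecreasing convex $\tau:[0,\infty)\to\mathbb R$, differentiable on $(0,\infty)$ with concave derivative $\tau'$ (with $\tau'(0):=\lim_{x\searrow0}\tau'(x)$), $\tau(0)=0$ and $\tau'(x)>0$ for $x>0$; $\tau'^{\oplus}$ is the right derivative of $\tau'$. *)

theory Defs
  imports "HOL-Probability.Probability"
begin

text \<open>Hadamard space: a complete metric space (type class complete_space) satisfying
  the midpoint inequality from the paper.\<close>
definition hadamard :: "'a::metric_space itself \<Rightarrow> bool" where
  "hadamard _ \<longleftrightarrow>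
     (\<forall>y0 y1::'a. \<exists>m::'a. \<forall>q::'a.
        dist y0 q ^ 2 / 2 + dist y1 q ^ 2 / 2 - dist y0 y1 ^ 2 / 4 \<ge> dist q m ^ 2)"

definition tau' :: "(real \<Rightarrow> real) \<Rightarrow> real \<Rightarrow> real" where
  "tau' \<tau> x = (if x > 0 then deriv \<tau> x else Lim (at_right 0) (deriv \<tau>))"

definition rderiv :: "(real \<Rightarrow> real) \<Rightarrow> real \<Rightarrow> real" where
  "rderiv f x = Lim (at_right 0) (\<lambda>h. (f (x + h) - f x) / h)"

definition S0plus :: "(real \<Rightarrow> real) set" where
  "S0plus = {\<tau>. mono_on {0..} \<tau> \<and> convex_on {0..} \<tau>
      \<and> (\<forall>x>0. \<tau> differentiable (at x))
      \<and> concave_on {0..} (tau' \<tau>)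
      \<and> \<tau> 0 = 0 \<and> (\<forall>x>0. tau' \<tau> x > 0)}"

end

theory Submission
  imports Defs
begin


lemma mono_tendsto_at_right0:
  fixes f :: "real \<Rightarrow> real"
  assumes mono: "\<And>x y. 0 < x \<Longrightarrow> x \<le> y \<Longrightarrow> f x \<le> f y"
    and bdd: "\<And>x. 0 < x \<Longrightarrow> B \<le> f x"
  shows "(f \<longlongrightarrow> Inf (f ` {0<..})) (at_right 0)"
proof (rule order_tendstoI)
  fix a assume "Inf (f ` {0<..}) < a"
  then obtain x where x: "x > 0" "f x < a"
    using cInf_lessD[of "f ` {0<..}" a] by auto
  show "eventually (\<lambda>y. f y < a) (at_right 0)"
    unfolding eventually_at_right_field
    using x mono by (intro exI[of _ x]) (metis less_imp_le order.strict_trans1)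
next
  fix a assume a: "a < Inf (f ` {0<..})"
  have "a < f y" if "y > 0" for y
  proof -
    have "Inf (f ` {0<..}) \<le> f y"
      by (rule cInf_lower) (use that bdd in \<open>auto intro!: bdd_belowI\<close>)
    thus ?thesis using a by simp
  qed
  thus "eventually (\<lambda>y. a < f y) (at_right 0)"
    unfolding eventually_at_right_field by (auto intro: exI[of _ 1])
qed

lemma convergent_at_right0_mono:
  fixes f :: "real \<Rightarrow> real"
  assumes "\<And>x y. 0 < x \<Longrightarrow> x \<le> y \<Longrightarrow> f x \<le> f y"
    and "\<And>x. 0 < x \<Longrightarrow> B \<le> f x"
  shows "(f \<longlongrightarrow> Lim (at_right 0) f) (at_right 0)"
proof -
  have h: "(f \<longlongrightarrow> Inf (f ` {0<..})) (at_right 0)" by (rule mono_tendsto_at_right0[OF assms])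
  moreover have "Lim (at_right 0) f = Inf (f ` {0<..})"
    using h by (intro tendsto_Lim) auto
  ultimately show ?thesis by simp
qed

lemma convergent_at_right0_anti:
  fixes f :: "real \<Rightarrow> real"
  assumes "\<And>x y. 0 < x \<Longrightarrow> x \<le> y \<Longrightarrow> f y \<le> f x"
    and "\<And>x. 0 < x \<Longrightarrow> f x \<le> B"
  shows "(f \<longlongrightarrow> Lim (at_right 0) f) (at_right 0)"
proof -
  have "((\<lambda>x. - f x) \<longlongrightarrow> Inf ((\<lambda>x. - f x) ` {0<..})) (at_right 0)"
    by (rule mono_tendsto_at_right0[where B="-B"]) (use assms in auto)
  hence "(f \<longlongrightarrow> - Inf ((\<lambda>x. - f x) ` {0<..})) (at_right 0)"
    using tendsto_minus by fastforce
  moreover have "Lim (at_right 0) f = - Inf ((\<lambda>x. - f x) ` {0<..})"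
    using calculation by (intro tendsto_Lim) auto
  ultimately show ?thesis by simp
qed

lemma incr_deriv:
  fixes f :: "real \<Rightarrow> real"
  assumes "a \<le> b" "continuous_on {a..b} f"
    "\<And>x. a < x \<Longrightarrow> x < b \<Longrightarrow> (f has_real_derivative f' x) (at x)"
    "\<And>x. a < x \<Longrightarrow> x < b \<Longrightarrow> 0 \<le> f' x"
  shows "f a \<le> f b"
  by (rule DERIV_nonneg_imp_increasing_open[OF assms(1) _ assms(2)]) (use assms(3,4) in blast)

locale tau_loc =
  fixes \<tau> :: "real \<Rightarrow> real"
  assumes S: "\<tau> \<in> S0plus"
begin

abbreviation "g \<equiv> tau' \<tau>"
abbreviation "\<rho> \<equiv> rderiv (tau' \<tau>)"

lemma tau0: "\<tau> 0 = 0" using S by (simp add: S0plus_def)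
lemma tau_mono: "0 \<le> x \<Longrightarrow> x \<le> y \<Longrightarrow> \<tau> x \<le> \<tau> y"
  using S by (auto simp: S0plus_def mono_on_def)
lemma tau_nonneg: "0 \<le> x \<Longrightarrow> 0 \<le> \<tau> x"
  using tau_mono[of 0 x] tau0 by simp
lemma tau_convex: "convex_on {0..} \<tau>" using S by (simp add: S0plus_def)
lemma g_concave: "concave_on {0..} g" using S by (simp add: S0plus_def)
lemma g_pos: "x > 0 \<Longrightarrow> g x > 0" using S by (simp add: S0plus_def)
lemma tau_deriv: assumes "x > 0" shows "(\<tau> has_real_derivative g x) (at x)"
proof -
  have "\<tau> differentiable (at x)" using S assms by (simp add: S0plus_def)
  hence "(\<tau> has_real_derivative deriv \<tau> x) (at x)"
    using DERIV_deriv_iff_real_differentiable by blast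
  thus ?thesis using assms by (simp add: tau'_def)
qed

lemma g_conc: "0 \<le> x \<Longrightarrow> 0 \<le> y \<Longrightarrow> 0 \<le> t \<Longrightarrow> t \<le> 1 \<Longrightarrow>
   (1 - t) * g x + t * g y \<le> g ((1 - t) * x + t * y)"
  using concave_onD[OF g_concave, of t x y] by simp

lemma g_slope:
  assumes "0 \<le> x" "x < y" "y < z"
  shows "(g y - g x) / (y - x) \<ge> (g z - g x) / (z - x)"
    "(g z - g x) / (z - x) \<ge> (g z - g y) / (z - y)"
proof -
  have c: "convex_on {0..} (\<lambda>x. - g x)" using g_concave by (simp add: concave_on_def)
  have 1: "((- g x) - (- g y)) / (x - y) \<le> ((- g x) - (- g z)) / (x - z)"
    and 2: "((- g x) - (- g z)) / (x - z) \<le> ((- g y) - (- g z)) / (y - z)"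
    using convex_on_slope_le[OF c, of x z y] assms by auto
  have e1: "((- g x) - (- g y)) / (x - y) = - ((g y - g x) / (y - x))"
    using assms by (simp add: field_simps)
  have e2: "((- g x) - (- g z)) / (x - z) = - ((g z - g x) / (z - x))"
    using assms by (simp add: field_simps)
  have e3: "((- g y) - (- g z)) / (y - z) = - ((g z - g y) / (z - y))"
    using assms by (simp add: field_simps)
  show "(g y - g x) / (y - x) \<ge> (g z - g x) / (z - x)" using 1 e1 e2 by simp
  show "(g z - g x) / (z - x) \<ge> (g z - g y) / (z - y)" using 2 e2 e3 by simp
qed

lemma g_mono_pos:
  assumes "0 < x" "x \<le> y" shows "g x \<le> g y"
proof (rule ccontr)
  assume "\<not> g x \<le> g y"
  hence lt: "g y < g x" by auto
  hence "x \<noteq> y" by auto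
  hence xy: "x < y" using assms by auto
  define s where "s = (g y - g x) / (y - x)"
  have s: "s < 0" using lt xy by (simp add: s_def divide_neg_pos)
  define z where "z = y + g y / (- s) + 1"
  have gy: "g y > 0" using g_pos assms by simp
  have yz: "y < z" using gy s by (simp add: z_def)
  have "(g z - g y) / (z - y) \<le> s"
    using g_slope[of x y z] assms xy yz unfolding s_def by linarith
  hence "g z - g y \<le> s * (z - y)" using yz by (simp add: divide_le_eq)
  also have "s * (z - y) = - g y + s" using s by (simp add: z_def field_simps)
  finally have "g z < 0" using s by simp
  moreover have "g z > 0" using g_pos yz assms by simp
  ultimately show False by simp
qed

lemma g0_nonneg: "g 0 \<ge> 0"
proof -
  have "(deriv \<tau> \<longlongrightarrow> Lim (at_right 0) (deriv \<tau>)) (at_right 0)"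
  proof (rule convergent_at_right0_mono[where B=0])
    fix x y :: real assume "0 < x" "x \<le> y"
    thus "deriv \<tau> x \<le> deriv \<tau> y" using g_mono_pos[of x y] by (simp add: tau'_def)
  next
    fix x :: real assume "0 < x"
    thus "0 \<le> deriv \<tau> x" using g_pos[of x] by (simp add: tau'_def)
  qed
  moreover have "eventually (\<lambda>x. 0 \<le> deriv \<tau> x) (at_right 0)"
    unfolding eventually_at_right_field
    by (intro exI[of _ 1]) (use g_pos in \<open>auto simp: tau'_def less_imp_le\<close>)
  ultimately have "0 \<le> Lim (at_right 0) (deriv \<tau>)"
    by (intro tendsto_lowerbound) auto
  thus ?thesis by (simp add: tau'_def)
qed

lemma g_nonneg: "0 \<le> x \<Longrightarrow> 0 \<le> g x"
  using g0_nonneg g_pos[of x] by (cases "x = 0") auto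

lemma g_ge_frac: assumes "0 \<le> x" "x \<le> y" "0 < y" shows "x / y * g y \<le> g x"
proof -
  have "(1 - x / y) * g 0 + x / y * g y \<le> g ((1 - x/y) * 0 + x / y * y)"
    by (rule g_conc) (use assms in auto)
  moreover have "(1 - x / y) * g 0 \<ge> 0" using assms g0_nonneg by simp
  ultimately show ?thesis using assms by simp
qed

lemma g_mono: "0 \<le> x \<Longrightarrow> x \<le> y \<Longrightarrow> g x \<le> g y"
proof (cases "x = 0")
  case True
  assume "0 \<le> x" "x \<le> y"
  show ?thesis
  proof (cases "y = 0")
    case False
    have y: "y > 0" using False \<open>x \<le> y\<close> True by simp
    have "(1 - 1/2) * g 0 + 1/2 * g y \<le> g ((1 - 1/2) * 0 + 1/2 * y)"
      by (rule g_conc) (use y in auto)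
    moreover have "g (y/2) \<le> g y" using g_mono_pos[of "y/2" y] y by simp
    ultimately show ?thesis using True by simp
  qed (use True in simp)
qed (use g_mono_pos in auto)


lemma g_subadd: assumes "0 \<le> x" "0 \<le> y" shows "g (x + y) \<le> g x + g y"
proof (cases "x + y = 0")
  case True thus ?thesis using assms g_nonneg by (simp add: add_nonneg_eq_0_iff)
next
  case False
  hence p: "x + y > 0" using assms by simp
  have "x / (x+y) * g (x+y) \<le> g x" by (rule g_ge_frac) (use assms p in auto)
  moreover have "y / (x+y) * g (x+y) \<le> g y" by (rule g_ge_frac) (use assms p in auto)
  ultimately have "x / (x+y) * g (x+y) + y / (x+y) * g (x+y) \<le> g x + g y" by simp
  moreover have "x / (x+y) + y / (x+y) = 1" using p by (simp flip: add_divide_distrib)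
  hence "x / (x+y) * g (x+y) + y / (x+y) * g (x+y) = g (x+y)"
    by (metis distrib_right mult_1)
  ultimately show ?thesis by simp
qed

lemma rho_tendsto:
  assumes Z: "Z > 0"
  shows "((\<lambda>h. (g (Z + h) - g Z) / h) \<longlongrightarrow> \<rho> Z) (at_right 0)"
  unfolding rderiv_def
proof (rule convergent_at_right0_anti[where B="(g Z - g 0) / (Z - 0)"])
  fix x y :: real assume xy: "0 < x" "x \<le> y"
  show "(g (Z + y) - g Z) / y \<le> (g (Z + x) - g Z) / x"
  proof (cases "x = y")
    case False
    hence "Z < Z + x" "Z + x < Z + y" using xy by auto
    from g_slope(1)[OF _ this] Z show ?thesis by simp
  qed simp
next
  fix h :: real assume h: "0 < h"
  have "(g (Z + h) - g 0) / (Z + h - 0) \<le> (g Z - g 0) / (Z - 0)"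
    using g_slope(1)[of 0 Z "Z + h"] Z h by simp
  moreover have "(g (Z + h) - g Z) / (Z + h - Z) \<le> (g (Z + h) - g 0) / (Z + h - 0)"
    using g_slope(2)[of 0 Z "Z + h"] Z h by simp
  ultimately show "(g (Z + h) - g Z) / h \<le> (g Z - g 0) / (Z - 0)" by simp
qed

lemma rho_nonneg: assumes "Z > 0" shows "\<rho> Z \<ge> 0"
proof (rule tendsto_lowerbound[OF rho_tendsto[OF assms]])
  show "\<forall>\<^sub>F h in at_right 0. 0 \<le> (g (Z + h) - g Z) / h"
    unfolding eventually_at_right_field
    by (intro exI[of _ 1]) (use assms in \<open>auto intro!: divide_nonneg_pos g_mono\<close>)
qed simp

lemma rho_le_slope:
  assumes "0 \<le> x" "x < y" "y \<le> Z"
  shows "\<rho> Z \<le> (g y - g x) / (y - x)"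
proof (rule tendsto_upperbound[OF rho_tendsto])
  show "Z > 0" using assms by simp
  show "\<forall>\<^sub>F h in at_right 0. (g (Z + h) - g Z) / h \<le> (g y - g x) / (y - x)"
    unfolding eventually_at_right_field
  proof (intro exI[of _ 1] allI impI conjI)
    fix h :: real assume h: "0 < h" "h < 1"
    define w where "w = Z + h"
    have yw: "y < w" using assms h by (simp add: w_def)
    have 1: "(g w - g x) / (w - x) \<le> (g y - g x) / (y - x)" using g_slope(1)[OF assms(1,2) yw] .
    have 2: "(g w - g y) / (w - y) \<le> (g w - g x) / (w - x)" using g_slope(2)[OF assms(1,2) yw] .
    have 3: "(g w - g Z) / (w - Z) \<le> (g w - g y) / (w - y)"
    proof (cases "y = Z")
      case False
      hence "y < Z" using assms by simp
      show ?thesis by (rule g_slope(2)) (use assms h \<open>y < Z\<close> in \<open>auto simp: w_def\<close>)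
    qed simp
    show "(g (Z + h) - g Z) / h \<le> (g y - g x) / (y - x)"
      using 1 2 3 by (simp add: w_def)
  qed simp
qed simp

lemma rho_incr: assumes "0 \<le> x" "x \<le> y" "y \<le> Z" "Z > 0"
  shows "\<rho> Z * (y - x) \<le> g y - g x"
proof (cases "x = y")
  case False
  hence "x < y" using assms by simp
  from rho_le_slope[OF assms(1) this assms(3)] this show ?thesis by (simp add: le_divide_eq)
qed simp

lemma rho_lin: assumes "0 \<le> x" "x \<le> Z" "Z > 0" shows "\<rho> Z * x \<le> g x"
  using rho_incr[of 0 x Z] assms g0_nonneg by simp

lemma tau_cont: "continuous_on {0..} \<tau>"
proof (rule continuous_on_eq_continuous_within[THEN iffD2], intro ballI)
  fix x :: real assume x: "x \<in> {0..}"
  show "continuous (at x within {0..}) \<tau>"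
  proof (cases "x = 0")
    case False
    hence "x > 0" using x by simp
    hence "isCont \<tau> x" using tau_deriv DERIV_isCont by blast
    thus ?thesis using continuous_at_imp_continuous_at_within by blast
  next
    case True
    have "(\<tau> \<longlongrightarrow> 0) (at 0 within {0..})"
    proof (rule tendsto_sandwich[where f="\<lambda>_. 0" and h="\<lambda>y. y * \<tau> 1"])
      show "\<forall>\<^sub>F y in at 0 within {0..}. 0 \<le> \<tau> y"
        by (auto simp: eventually_at_filter tau_nonneg)
      have ev: "\<forall>\<^sub>F y in at 0 within {0..}. y \<in> {0..(1::real)}"
        by (subst eventually_at, rule exI[of _ 1]) (auto simp: dist_real_def)
      thus "\<forall>\<^sub>F y in at 0 within {0..}. \<tau> y \<le> y * \<tau> 1"
      proof (rule eventually_mono)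
        fix y :: real assume y: "y \<in> {0..1}"
        have "\<tau> ((1 - y) *\<^sub>R 0 + y *\<^sub>R 1) \<le> (1 - y) * \<tau> 0 + y * \<tau> 1"
          by (rule convex_onD[OF tau_convex]) (use y in auto)
        thus "\<tau> y \<le> y * \<tau> 1" using tau0 by simp
      qed
      have "((\<lambda>y. y * \<tau> 1) \<longlongrightarrow> 0 * \<tau> 1) (at 0 within {0..})"
        by (intro tendsto_intros)
      thus "((\<lambda>y. y * \<tau> 1) \<longlongrightarrow> 0) (at 0 within {0..})" by simp
    qed simp
    thus ?thesis using True tau0 by (simp add: continuous_within)
  qed
qed


lemma tau_cont_sub: "S \<subseteq> {0..} \<Longrightarrow> continuous_on S \<tau>"
  using tau_cont continuous_on_subset by blast

lemma tau_up: assumes "0 \<le> x" "x \<le> y" shows "\<tau> y - \<tau> x \<le> g y * (y - x)"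
proof -
  have "(\<lambda>t. g y * t - \<tau> t) x \<le> (\<lambda>t. g y * t - \<tau> t) y"
  proof (rule incr_deriv[OF assms(2)])
    show "continuous_on {x..y} (\<lambda>t. g y * t - \<tau> t)"
      by (intro continuous_intros tau_cont_sub) (use assms in auto)
    fix t assume t: "x < t" "t < y"
    show "((\<lambda>t. g y * t - \<tau> t) has_real_derivative g y * 1 - g t) (at t)"
      by (intro derivative_intros tau_deriv) (use t assms in auto)
    show "0 \<le> g y * 1 - g t" using g_mono[of t y] t assms by simp
  qed
  thus ?thesis by (simp add: algebra_simps)
qed

lemma tau_lip: assumes "0 \<le> b" "0 \<le> c"
  shows "\<bar>\<tau> b - \<tau> c\<bar> \<le> \<bar>b - c\<bar> * (g c + g \<bar>b - c\<bar>)"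
proof (cases "c \<le> b")
  case True
  have "\<tau> b - \<tau> c \<le> g b * (b - c)" by (rule tau_up) (use assms True in auto)
  also have "g b \<le> g c + g (b - c)" using g_subadd[of c "b - c"] assms True by simp
  hence "g b * (b - c) \<le> (g c + g (b - c)) * (b - c)" using True by (intro mult_right_mono) auto
  finally have "\<tau> b - \<tau> c \<le> (g c + g (b - c)) * (b - c)" .
  moreover have "\<tau> c \<le> \<tau> b" using tau_mono assms True by simp
  ultimately show ?thesis using True by (simp add: mult.commute)
next
  case False
  have "\<tau> c - \<tau> b \<le> g c * (c - b)" by (rule tau_up) (use assms False in auto)
  also have "g c * (c - b) \<le> (g c + g (c - b)) * (c - b)"
    using g_nonneg[of "c - b"] False by (intro mult_right_mono) auto
  finally have "\<tau> c - \<tau> b \<le> (g c + g (c - b)) * (c - b)" .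
  moreover have "\<tau> b \<le> \<tau> c" using tau_mono assms False by simp
  ultimately show ?thesis using False by (simp add: mult.commute abs_if)
qed

lemma tau_half: assumes "0 \<le> D" shows "D * g D \<le> 2 * \<tau> D"
proof (cases "D = 0")
  case True thus ?thesis using tau0 by simp
next
  case False
  hence D: "D > 0" using assms by simp
  have "(\<lambda>t. \<tau> t - g D / D * t\<^sup>2 / 2) 0 \<le> (\<lambda>t. \<tau> t - g D / D * t\<^sup>2 / 2) D"
  proof (rule incr_deriv[where f="\<lambda>t. \<tau> t - g D / D * t\<^sup>2 / 2"])
    show "continuous_on {0..D} (\<lambda>t. \<tau> t - g D / D * t\<^sup>2 / 2)"
      by (intro continuous_intros tau_cont_sub) auto
    fix t assume t: "0 < t" "t < D"
    show "((\<lambda>t. \<tau> t - g D / D * t\<^sup>2 / 2) has_real_derivative g t - g D / D * (2 * t) / 2) (at t)"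
      using D by (auto intro!: derivative_eq_intros tau_deriv t)
    have "t / D * g D \<le> g t" by (rule g_ge_frac) (use t in auto)
    thus "0 \<le> g t - g D / D * (2 * t) / 2" by (simp add: field_simps)
  qed (use D in auto)
  moreover have "g D / D * D\<^sup>2 / 2 = D * g D / 2" using \<open>D > 0\<close> by (simp add: power2_eq_square)
  ultimately show ?thesis using tau0 by simp
qed

lemma tau_pos: assumes "d > 0" shows "\<tau> d > 0"
  using tau_half[of d] g_pos[OF assms] assms by (smt (verit) mult_pos_pos)

lemma tau_ratio: assumes "0 < d" "d \<le> D" shows "\<tau> d \<le> d / D * \<tau> D"
proof -
  have "\<tau> ((1 - d / D) *\<^sub>R 0 + (d / D) *\<^sub>R D) \<le> (1 - d / D) * \<tau> 0 + d / D * \<tau> D"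
    by (rule convex_onD[OF tau_convex]) (use assms in auto)
  thus ?thesis using assms tau0 by simp
qed

lemma tau_midconv: assumes "0 \<le> a" "0 \<le> b" shows "2 * \<tau> ((a + b) / 2) \<le> \<tau> a + \<tau> b"
proof -
  have "\<tau> ((1 - 1/2) *\<^sub>R a + (1/2) *\<^sub>R b) \<le> (1 - 1/2) * \<tau> a + 1/2 * \<tau> b"
    by (rule convex_onD[OF tau_convex]) (use assms in auto)
  thus ?thesis by (simp add: field_simps)
qed

lemma tau_low: assumes "0 \<le> b" "0 \<le> D" "0 \<le> R" "D - R \<le> b"
  shows "\<tau> D - g D * R \<le> \<tau> b"
proof (cases "D \<le> b")
  case True thus ?thesis using tau_mono[of D b] assms g_nonneg[of D] by (smt (verit) mult_nonneg_nonneg)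
next
  case False
  have "\<tau> D - \<tau> b \<le> g D * (D - b)" by (rule tau_up) (use assms False in auto)
  also have "\<dots> \<le> g D * R" using assms g_nonneg[of D] by (intro mult_left_mono) auto
  finally show ?thesis by simp
qed

lemma P1: assumes "0 \<le> a" "a \<le> b" "b \<le> Z" "Z > 0"
  shows "\<rho> Z * (b - a)\<^sup>2 / 4 \<le> \<tau> a + \<tau> b - 2 * \<tau> ((a + b) / 2)"
proof -
  define s where "s = (a + b) / 2"
  define h where "h = (b - a) / 2"
  have sa: "s - h = a" and sb: "s + h = b" by (simp_all add: s_def h_def field_simps)
  let ?\<chi> = "\<lambda>t. \<tau> (s + t) + \<tau> (s - t) - 2 * \<tau> s - \<rho> Z * t\<^sup>2"
  have "?\<chi> 0 \<le> ?\<chi> h"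
  proof (rule incr_deriv[where f="?\<chi>"])
    show "0 \<le> h" using assms by (simp add: h_def)
    have "continuous_on {0..h} (\<lambda>t. \<tau> (s + t))"
      by (rule continuous_on_compose2[OF tau_cont]) (use assms sa in \<open>auto intro!: continuous_intros\<close>)
    moreover have "continuous_on {0..h} (\<lambda>t. \<tau> (s - t))"
      by (rule continuous_on_compose2[OF tau_cont]) (use assms sa in \<open>auto intro!: continuous_intros\<close>)
    ultimately show "continuous_on {0..h} ?\<chi>" by (intro continuous_intros) auto
    fix t assume t: "0 < t" "t < h"
    have p1: "s + t > 0" and p2: "s - t > 0" using t assms sa by auto
    have d1: "((\<lambda>t. \<tau> (s + t)) has_real_derivative g (s + t) * (0 + 1)) (at t)"
      by (rule DERIV_chain2[where f=\<tau> and g="\<lambda>u. s + u" and x=t, OF tau_deriv[OF p1]]) (auto intro!: derivative_eq_intros)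
    have d2: "((\<lambda>t. \<tau> (s - t)) has_real_derivative g (s - t) * (0 - 1)) (at t)"
      by (rule DERIV_chain2[where f=\<tau> and g="\<lambda>u. s - u" and x=t, OF tau_deriv[OF p2]]) (auto intro!: derivative_eq_intros)
    have d3: "((\<lambda>t. \<rho> Z * t\<^sup>2) has_real_derivative \<rho> Z * (2 * t)) (at t)"
      by (auto intro!: derivative_eq_intros)
    show "(?\<chi> has_real_derivative (g (s + t) * (0 + 1) + g (s - t) * (0 - 1) - 0 - \<rho> Z * (2 * t))) (at t)"
      by (rule DERIV_diff[OF DERIV_diff[OF DERIV_add[OF d1 d2] DERIV_const] d3])
    have "\<rho> Z * ((s + t) - (s - t)) \<le> g (s + t) - g (s - t)"
      by (rule rho_incr) (use t assms sa sb in auto)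
    thus "0 \<le> g (s + t) * (0 + 1) + g (s - t) * (0 - 1) - 0 - \<rho> Z * (2 * t)" by simp
  qed
  moreover have "h\<^sup>2 = (b - a)\<^sup>2 / 4" by (simp add: h_def power2_eq_square field_simps)
  ultimately show ?thesis using sa sb by (simp add: s_def)
qed

lemma P2: assumes "0 \<le> c" "c \<le> s" "s \<le> Z" "Z > 0"
  shows "\<rho> Z * (s\<^sup>2 - c\<^sup>2) / 2 \<le> \<tau> s - \<tau> c"
proof -
  have "(\<lambda>t. \<tau> t - \<rho> Z * t\<^sup>2 / 2) c \<le> (\<lambda>t. \<tau> t - \<rho> Z * t\<^sup>2 / 2) s"
  proof (rule incr_deriv[where f="\<lambda>t. \<tau> t - \<rho> Z * t\<^sup>2 / 2", OF assms(2)])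
    show "continuous_on {c..s} (\<lambda>t. \<tau> t - \<rho> Z * t\<^sup>2 / 2)"
      by (intro continuous_intros tau_cont_sub) (use assms in auto)
    fix t assume t: "c < t" "t < s"
    show "((\<lambda>t. \<tau> t - \<rho> Z * t\<^sup>2 / 2) has_real_derivative g t - \<rho> Z * (2 * t) / 2) (at t)"
      by (auto intro!: derivative_eq_intros tau_deriv) (use t assms in auto)
    have "\<rho> Z * t \<le> g t" by (rule rho_lin) (use t assms in auto)
    thus "0 \<le> g t - \<rho> Z * (2 * t) / 2" by simp
  qed
  thus ?thesis by (simp add: field_simps)
qed

lemma NB: assumes "Z > 0" "0 \<le> a" "a \<le> Z" "0 \<le> b" "b \<le> Z" "0 \<le> c" "c \<le> (a + b) / 2"
    "c\<^sup>2 \<le> (a\<^sup>2 + b\<^sup>2) / 2 - D\<^sup>2 / 4"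
  shows "\<rho> Z * D\<^sup>2 / 4 \<le> \<tau> a + \<tau> b - 2 * \<tau> c"
proof -
  have p1: "\<rho> Z * (b - a)\<^sup>2 / 4 \<le> \<tau> a + \<tau> b - 2 * \<tau> ((a + b) / 2)"
  proof (cases "a \<le> b")
    case True thus ?thesis using P1 assms by blast
  next
    case False
    have "\<rho> Z * (a - b)\<^sup>2 / 4 \<le> \<tau> b + \<tau> a - 2 * \<tau> ((b + a) / 2)"
      by (rule P1) (use False assms in auto)
    thus ?thesis by (simp add: power2_commute add.commute)
  qed
  have p2: "\<rho> Z * (((a + b) / 2)\<^sup>2 - c\<^sup>2) / 2 \<le> \<tau> ((a + b) / 2) - \<tau> c"
    by (rule P2) (use assms in auto)
  have r: "\<rho> Z \<ge> 0" using rho_nonneg assms by simp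
  have "D\<^sup>2 / 4 \<le> (a\<^sup>2 + b\<^sup>2) / 2 - c\<^sup>2" using assms(8) by linarith
  from mult_left_mono[OF this r]
  have "\<rho> Z * D\<^sup>2 / 4 \<le> \<rho> Z * ((a\<^sup>2 + b\<^sup>2) / 2 - c\<^sup>2)" by simp
  also have "\<rho> Z * ((a\<^sup>2 + b\<^sup>2) / 2 - c\<^sup>2) = \<rho> Z * (b - a)\<^sup>2 / 4 + 2 * (\<rho> Z * (((a + b) / 2)\<^sup>2 - c\<^sup>2) / 2)"
    by (simp add: power2_eq_square field_simps)
  also have "\<dots> \<le> \<tau> a + \<tau> b - 2 * \<tau> c" using p1 p2 by simp
  finally show ?thesis .
qed

end


definition mid :: "'a::metric_space \<Rightarrow> 'a \<Rightarrow> 'a" where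
  "mid x y = (SOME \<mu>. \<forall>q. dist x q ^ 2 / 2 + dist y q ^ 2 / 2 - dist x y ^ 2 / 4 \<ge> dist q \<mu> ^ 2)"

lemma mid_ineq:
  fixes x y q :: "'a::metric_space"
  assumes "hadamard TYPE('a)"
  shows "dist q (mid x y) ^ 2 \<le> dist x q ^ 2 / 2 + dist y q ^ 2 / 2 - dist x y ^ 2 / 4"
proof -
  have "\<exists>\<mu>. \<forall>q. dist x q ^ 2 / 2 + dist y q ^ 2 / 2 - dist x y ^ 2 / 4 \<ge> dist q \<mu> ^ 2"
    using assms unfolding hadamard_def by blast
  from someI_ex[OF this] show ?thesis unfolding mid_def by blast
qed

lemma mid_dist:
  fixes x y :: "'a::metric_space"
  assumes "hadamard TYPE('a)"
  shows "dist x (mid x y) = dist x y / 2" "dist y (mid x y) = dist x y / 2"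
proof -
  have 1: "dist x (mid x y) ^ 2 \<le> (dist x y / 2) ^ 2"
    using mid_ineq[OF assms, of x x y] by (simp add: power2_eq_square dist_commute field_simps)
  have 2: "dist y (mid x y) ^ 2 \<le> (dist x y / 2) ^ 2"
    using mid_ineq[OF assms, of y x y] by (simp add: power2_eq_square dist_commute field_simps)
  have a: "dist x (mid x y) \<le> dist x y / 2" using power2_le_imp_le[OF 1] by simp
  have b: "dist y (mid x y) \<le> dist x y / 2" using power2_le_imp_le[OF 2] by simp
  have "dist x y \<le> dist x (mid x y) + dist y (mid x y)" by (metis dist_commute dist_triangle)
  thus "dist x (mid x y) = dist x y / 2" "dist y (mid x y) = dist x y / 2" using a b by linarith+
qed

lemma mid_conv:
  fixes x y q :: "'a::metric_space"
  assumes "hadamard TYPE('a)"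
  shows "dist q (mid x y) \<le> (dist x q + dist y q) / 2"
proof -
  have t: "\<bar>dist x q - dist y q\<bar> \<le> dist x y"
    by (metis abs_le_iff dist_commute dist_triangle2 dist_triangle3 diff_le_eq minus_diff_eq)
  hence "(dist x q - dist y q)^2 \<le> (dist x y)^2" by (metis abs_ge_zero power2_abs power_mono)
  hence "dist q (mid x y) ^ 2 \<le> ((dist x q + dist y q) / 2) ^ 2"
    using mid_ineq[OF assms, of q x y] by (simp add: power2_eq_square field_simps)
  from power2_le_imp_le[OF this] show ?thesis by simp
qed

locale main_loc = tau_loc \<tau> for \<tau> +
  fixes M :: "'w measure" and Y :: "'w \<Rightarrow> 'a::{metric_space, complete_space}" and ob m :: 'a
  assumes P: "prob_space M" and H: "hadamard TYPE('a)" and Ymeas: "Y \<in> measurable M borel"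
    and Int: "integrable M (\<lambda>\<omega>. g (dist (Y \<omega>) ob))"
    and argmin: "\<forall>q. (\<integral>\<omega>. \<tau> (dist (Y \<omega>) m) - \<tau> (dist (Y \<omega>) ob) \<partial>M)
             \<le> (\<integral>\<omega>. \<tau> (dist (Y \<omega>) q) - \<tau> (dist (Y \<omega>) ob) \<partial>M)"
begin

interpretation prob_space M by (rule P)

lemma meas_dist[measurable]: "(\<lambda>\<omega>. dist (Y \<omega>) q) \<in> borel_measurable M"
  by (rule measurable_compose[OF Ymeas borel_measurable_continuous_onI]) (intro continuous_intros)

lemma meas_tau: "(\<lambda>\<omega>. \<tau> (dist (Y \<omega>) q)) \<in> borel_measurable M"
proof -
  have "mono (\<lambda>x. \<tau> (max 0 x))" by (auto simp: mono_def intro!: tau_mono)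
  hence "(\<lambda>x. \<tau> (max 0 x)) \<in> borel_measurable borel" by (rule borel_measurable_mono)
  from measurable_compose[OF meas_dist this] show ?thesis by simp
qed

lemma meas_g: "(\<lambda>\<omega>. g (dist (Y \<omega>) q)) \<in> borel_measurable M"
proof -
  have "mono (\<lambda>x. g (max 0 x))" by (auto simp: mono_def intro!: g_mono)
  hence "(\<lambda>x. g (max 0 x)) \<in> borel_measurable borel" by (rule borel_measurable_mono)
  from measurable_compose[OF meas_dist this] show ?thesis by simp
qed

definition f :: "'a \<Rightarrow> 'w \<Rightarrow> real" where
  "f q \<omega> = \<tau> (dist (Y \<omega>) q) - \<tau> (dist (Y \<omega>) ob)"

definition F :: "'a \<Rightarrow> real" where "F q = (\<integral>\<omega>. f q \<omega> \<partial>M)"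

lemma int_f: "integrable M (f q)"
proof (rule Bochner_Integration.integrable_bound)
  show "integrable M (\<lambda>\<omega>. dist q ob * (g (dist (Y \<omega>) ob) + g (dist q ob)))"
    by (intro integrable_mult_right Bochner_Integration.integrable_add Int integrable_const)
  show "f q \<in> borel_measurable M" unfolding f_def using meas_tau by measurable
  show "AE \<omega> in M. norm (f q \<omega>) \<le> norm (dist q ob * (g (dist (Y \<omega>) ob) + g (dist q ob)))"
  proof (rule AE_I2)
    fix \<omega>
    let ?b = "dist (Y \<omega>) q" and ?c = "dist (Y \<omega>) ob"
    have e: "\<bar>?b - ?c\<bar> \<le> dist q ob"
      by (metis abs_le_iff dist_commute dist_triangle2 dist_triangle3 diff_le_eq minus_diff_eq)
    have "\<bar>\<tau> ?b - \<tau> ?c\<bar> \<le> \<bar>?b - ?c\<bar> * (g ?c + g \<bar>?b - ?c\<bar>)" by (rule tau_lip) auto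
    also have "\<dots> \<le> dist q ob * (g ?c + g (dist q ob))"
      using e g_nonneg g_mono[OF _ e] by (intro mult_mono add_mono) auto
    finally show "norm (f q \<omega>) \<le> norm (dist q ob * (g (dist (Y \<omega>) ob) + g (dist q ob)))"
      using g_nonneg by (simp add: f_def)
  qed
qed

lemma Fmin: "F m \<le> F q" using argmin by (simp add: F_def f_def)

lemma int_gm: "integrable M (\<lambda>\<omega>. g (dist (Y \<omega>) m))"
proof (rule Bochner_Integration.integrable_bound)
  show "integrable M (\<lambda>\<omega>. g (dist (Y \<omega>) ob) + g (dist ob m))"
    by (intro Bochner_Integration.integrable_add Int integrable_const)
  show "(\<lambda>\<omega>. g (dist (Y \<omega>) m)) \<in> borel_measurable M" by (rule meas_g)
  show "AE \<omega> in M. norm (g (dist (Y \<omega>) m)) \<le> norm (g (dist (Y \<omega>) ob) + g (dist ob m))"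
  proof (rule AE_I2)
    fix \<omega>
    have "g (dist (Y \<omega>) m) \<le> g (dist (Y \<omega>) ob + dist ob m)" by (rule g_mono) (auto intro: dist_triangle)
    also have "\<dots> \<le> g (dist (Y \<omega>) ob) + g (dist ob m)" by (rule g_subadd) auto
    finally show "norm (g (dist (Y \<omega>) m)) \<le> norm (g (dist (Y \<omega>) ob) + g (dist ob m))"
      using g_nonneg by simp
  qed
qed

lemma F_diff: "(\<integral>\<omega>. \<tau> (dist (Y \<omega>) q) - \<tau> (dist (Y \<omega>) p) \<partial>M) = F q - F p"
proof -
  have "(\<integral>\<omega>. \<tau> (dist (Y \<omega>) q) - \<tau> (dist (Y \<omega>) p) \<partial>M) = (\<integral>\<omega>. f q \<omega> - f p \<omega> \<partial>M)"
    by (simp add: f_def)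
  also have "\<dots> = F q - F p" unfolding F_def by (rule Bochner_Integration.integral_diff[OF int_f int_f])
  finally show ?thesis .
qed

lemma K_int: "F m + F x - 2 * F c = (\<integral>\<omega>. \<tau> (dist (Y \<omega>) m) + \<tau> (dist (Y \<omega>) x) - 2 * \<tau> (dist (Y \<omega>) c) \<partial>M)"
proof -
  have "(\<integral>\<omega>. \<tau> (dist (Y \<omega>) m) + \<tau> (dist (Y \<omega>) x) - 2 * \<tau> (dist (Y \<omega>) c) \<partial>M)
      = (\<integral>\<omega>. f m \<omega> + f x \<omega> - 2 * f c \<omega> \<partial>M)" by (simp add: f_def algebra_simps)
  also have "\<dots> = F m + F x - 2 * F c"
    unfolding F_def using int_f by (simp add: integral_diff integral_add)
  finally show ?thesis by simp
qed

lemma K_lower: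
  assumes nn: "\<And>\<omega>. 0 \<le> \<tau> (dist (Y \<omega>) m) + \<tau> (dist (Y \<omega>) x) - 2 * \<tau> (dist (Y \<omega>) c)"
    and L: "0 \<le> L"
    and low: "\<And>\<omega>. dist (Y \<omega>) m \<le> R \<Longrightarrow> L \<le> \<tau> (dist (Y \<omega>) m) + \<tau> (dist (Y \<omega>) x) - 2 * \<tau> (dist (Y \<omega>) c)"
  shows "L * measure M {\<omega> \<in> space M. dist (Y \<omega>) m \<le> R} \<le> F m + F x - 2 * F c"
proof -
  let ?S = "{\<omega> \<in> space M. dist (Y \<omega>) m \<le> R}"
  have S: "?S \<in> sets M" by measurable
  have "L * measure M ?S = (\<integral>\<omega>. L * indicator ?S \<omega> \<partial>M)"
    using S by (simp add: Int_absorb2 sets.sets_into_space)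
  also have "\<dots> \<le> (\<integral>\<omega>. \<tau> (dist (Y \<omega>) m) + \<tau> (dist (Y \<omega>) x) - 2 * \<tau> (dist (Y \<omega>) c) \<partial>M)"
  proof (rule integral_mono)
    show "integrable M (\<lambda>\<omega>. L * indicator ?S \<omega>)" using S emeasure_finite[of ?S] by (intro integrable_mult_right integrable_real_indicator) (auto simp: less_top[symmetric])
    have "integrable M (\<lambda>\<omega>. f m \<omega> + f x \<omega> - 2 * f c \<omega>)" using int_f by auto
    thus "integrable M (\<lambda>\<omega>. \<tau> (dist (Y \<omega>) m) + \<tau> (dist (Y \<omega>) x) - 2 * \<tau> (dist (Y \<omega>) c))"
      by (simp add: f_def algebra_simps)
    fix \<omega> assume "\<omega> \<in> space M"
    thus "L * indicator ?S \<omega> \<le> \<tau> (dist (Y \<omega>) m) + \<tau> (dist (Y \<omega>) x) - 2 * \<tau> (dist (Y \<omega>) c)"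
      using nn low by (auto simp: indicator_def)
  qed
  also have "\<dots> = F m + F x - 2 * F c" by (rule K_int[symmetric])
  finally show ?thesis .
qed

lemma K_nonneg: "0 \<le> \<tau> (dist (Y \<omega>) m) + \<tau> (dist (Y \<omega>) x) - 2 * \<tau> (dist (Y \<omega>) (mid m x))"
proof -
  have "dist (Y \<omega>) (mid m x) \<le> (dist m (Y \<omega>) + dist x (Y \<omega>)) / 2" by (rule mid_conv[OF H])
  hence "\<tau> (dist (Y \<omega>) (mid m x)) \<le> \<tau> ((dist (Y \<omega>) m + dist (Y \<omega>) x) / 2)"
    by (intro tau_mono) (auto simp: dist_commute)
  moreover have "2 * \<tau> ((dist (Y \<omega>) m + dist (Y \<omega>) x) / 2) \<le> \<tau> (dist (Y \<omega>) m) + \<tau> (dist (Y \<omega>) x)"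
    by (rule tau_midconv) auto
  ultimately show ?thesis by simp
qed

lemma F_mid_nonneg: "0 \<le> F m + F x - 2 * F (mid m x)"
proof -
  have "0 * measure M {\<omega> \<in> space M. dist (Y \<omega>) m \<le> 0} \<le> F m + F x - 2 * F (mid m x)"
    by (rule K_lower[OF K_nonneg]) (simp, rule K_nonneg)
  thus ?thesis by simp
qed

lemma near_gen:
  assumes Z: "Z > 0" and R: "0 \<le> R" and RZ: "R + dist q m \<le> Z"
  shows "\<rho> Z * (dist q m)\<^sup>2 / 4 * measure M {\<omega> \<in> space M. dist (Y \<omega>) m \<le> R} \<le> F q - F m"
proof -
  let ?\<mu> = "mid m q"
  have "\<rho> Z * (dist q m)\<^sup>2 / 4 * measure M {\<omega> \<in> space M. dist (Y \<omega>) m \<le> R} \<le> F m + F q - 2 * F ?\<mu>"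
  proof (rule K_lower[OF K_nonneg])
    show "0 \<le> \<rho> Z * (dist q m)\<^sup>2 / 4" using rho_nonneg[OF Z] by simp
    fix \<omega> assume a: "dist (Y \<omega>) m \<le> R"
    have b: "dist (Y \<omega>) q \<le> dist (Y \<omega>) m + dist q m" by (metis dist_commute dist_triangle)
    show "\<rho> Z * (dist q m)\<^sup>2 / 4 \<le> \<tau> (dist (Y \<omega>) m) + \<tau> (dist (Y \<omega>) q) - 2 * \<tau> (dist (Y \<omega>) ?\<mu>)"
    proof (rule NB[OF Z])
      show "dist (Y \<omega>) m \<le> Z" "dist (Y \<omega>) q \<le> Z" using a b RZ zero_le_dist[of q m] by linarith+
      show "dist (Y \<omega>) ?\<mu> \<le> (dist (Y \<omega>) m + dist (Y \<omega>) q) / 2"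
        using mid_conv[OF H, of "Y \<omega>" m q] by (simp add: dist_commute)
      show "(dist (Y \<omega>) ?\<mu>)\<^sup>2 \<le> ((dist (Y \<omega>) m)\<^sup>2 + (dist (Y \<omega>) q)\<^sup>2) / 2 - (dist q m)\<^sup>2 / 4"
        using mid_ineq[OF H, of "Y \<omega>" m q] by (simp add: dist_commute add_divide_distrib)
    qed auto
  qed
  moreover have "0 \<le> F ?\<mu> - F m" using Fmin by simp
  ultimately show ?thesis by linarith
qed

end


lemma geo: "(\<Sum>j<n. (2::real)^j) = 2^n - 1"
  by (induction n) auto

lemma geo_if: "(\<Sum>j<k. if j + L < k then (2::real)^j else 0) \<le> 2^k / 2^L"
proof -
  have "(\<Sum>j<k. if j + L < k then (2::real)^j else 0) = (\<Sum>j\<in>{j\<in>{..<k}. j + L < k}. 2^j)"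
    using sum.inter_filter[of "{..<k}" "\<lambda>j. (2::real)^j" "\<lambda>j. j + L < k"] by simp
  also have "{j\<in>{..<k}. j + L < k} = {..<k - L}" by auto
  also have "(\<Sum>j<k - L. (2::real)^j) = 2^(k-L) - 1" by (rule geo)
  also have "\<dots> \<le> 2^k / 2^L"
  proof (cases "L \<le> k")
    case True thus ?thesis by (simp add: power_diff)
  next
    case False thus ?thesis by simp
  qed
  finally show ?thesis .
qed

context main_loc
begin

interpretation prob_space M by (rule P)

lemma int_diff: "integrable M (\<lambda>\<omega>. \<tau> (dist (Y \<omega>) q) - \<tau> (dist (Y \<omega>) p))"
proof -
  have "integrable M (\<lambda>\<omega>. f q \<omega> - f p \<omega>)" using int_f by auto
  thus ?thesis by (simp add: f_def)
qed

abbreviation "Ga \<equiv> (\<integral>\<omega>. g (dist (Y \<omega>) m) \<partial>M)"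

lemma Ga_nonneg: "0 \<le> Ga" by (rule Bochner_Integration.integral_nonneg) (simp add: g_nonneg)

lemma upper: "F q - F m \<le> dist q m * (Ga + g (dist q m))"
proof -
  have "F q - F m = (\<integral>\<omega>. \<tau> (dist (Y \<omega>) q) - \<tau> (dist (Y \<omega>) m) \<partial>M)" by (rule F_diff[symmetric])
  also have "\<dots> \<le> (\<integral>\<omega>. dist q m * (g (dist (Y \<omega>) m) + g (dist q m)) \<partial>M)"
  proof (rule integral_mono[OF int_diff])
    show "integrable M (\<lambda>\<omega>. dist q m * (g (dist (Y \<omega>) m) + g (dist q m)))"
      by (intro integrable_mult_right Bochner_Integration.integrable_add int_gm integrable_const)
    fix \<omega>
    let ?b = "dist (Y \<omega>) q" and ?a = "dist (Y \<omega>) m"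
    have e: "\<bar>?b - ?a\<bar> \<le> dist q m"
      by (metis abs_le_iff dist_commute dist_triangle2 dist_triangle3 diff_le_eq minus_diff_eq)
    have "\<tau> ?b - \<tau> ?a \<le> \<bar>\<tau> ?b - \<tau> ?a\<bar>" by simp
    also have "\<dots> \<le> \<bar>?b - ?a\<bar> * (g ?a + g \<bar>?b - ?a\<bar>)" by (rule tau_lip) auto
    also have "\<dots> \<le> dist q m * (g ?a + g (dist q m))"
      using e g_nonneg g_mono[OF _ e] by (intro mult_mono add_mono) auto
    finally show "\<tau> ?b - \<tau> ?a \<le> dist q m * (g ?a + g (dist q m))" .
  qed
  also have "\<dots> = dist q m * (Ga + g (dist q m))"
    using int_gm prob_space.prob_space[OF P] by (simp add: Bochner_Integration.integral_add)
  finally show ?thesis .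
qed

lemma exR:
  assumes x0: "x0 = Inf (ereal ` {x. x > 0 \<and> \<rho> x = 0})"
    and pos: "measure M {\<omega> \<in> space M. ereal (dist (Y \<omega>) m) < x0} > 0"
  shows "\<exists>R. 0 \<le> R \<and> ereal R < x0 \<and> 0 < measure M {\<omega> \<in> space M. dist (Y \<omega>) m \<le> R}"
proof (rule ccontr)
  assume H0: "\<not> ?thesis"
  have x0nn: "0 \<le> x0" unfolding x0 by (rule Inf_greatest) auto
  define r where "r n = (if x0 = \<infinity> then real n else real_of_ereal x0 - 1 / real (Suc n))" for n
  define A where "A n = {\<omega> \<in> space M. dist (Y \<omega>) m \<le> r n}" for n
  have rlt: "ereal (r n) < x0" for n
  proof (cases "x0 = \<infinity>")
    case False
    then obtain x where "x0 = ereal x" using x0nn by (cases x0) auto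
    thus ?thesis using False by (simp add: r_def)
  qed (simp add: r_def)
  have An: "A n \<in> null_sets M" for n
  proof (cases "0 \<le> r n")
    case True
    have As: "A n \<in> sets M" unfolding A_def by measurable
    have H1: "\<forall>R. 0 \<le> R \<and> ereal R < x0 \<longrightarrow> \<not> 0 < measure M {\<omega> \<in> space M. dist (Y \<omega>) m \<le> R}"
      using H0 by simp
    have "\<not> 0 < measure M (A n)" using H1[rule_format, of "r n"] True rlt unfolding A_def by simp
    hence "measure M (A n) = 0" using measure_nonneg[of M "A n"] by linarith
    hence "emeasure M (A n) = 0" using As by (simp add: emeasure_eq_measure)
    thus ?thesis using As by blast
  next
    case False
    have "dist (Y \<omega>) m \<le> r n \<Longrightarrow> False" for \<omega> using False zero_le_dist[of "Y \<omega>" m] by linarith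
    hence "A n = {}" unfolding A_def by blast
    thus ?thesis by simp
  qed
  let ?B = "{\<omega> \<in> space M. ereal (dist (Y \<omega>) m) < x0}"
  have Bs: "?B \<in> sets M" by measurable
  have sub: "?B \<subseteq> (\<Union>n. A n)"
  proof
    fix \<omega> assume w: "\<omega> \<in> ?B"
    let ?a = "dist (Y \<omega>) m"
    have ws: "\<omega> \<in> space M" and wl: "ereal ?a < x0" using w by auto
    show "\<omega> \<in> (\<Union>n. A n)"
    proof (cases "x0 = \<infinity>")
      case True
      have "\<omega> \<in> A (nat \<lceil>?a\<rceil>)" unfolding A_def r_def using ws True real_nat_ceiling_ge by simp
      thus ?thesis by blast
    next
      case False
      then obtain x where x: "x0 = ereal x" using x0nn by (cases x0) auto
      have ax: "?a < x" using wl x by simp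
      obtain n where n: "inverse (real (Suc n)) < x - ?a"
        using reals_Archimedean[of "x - ?a"] ax by auto
      have "?a \<le> x - 1 / real (Suc n)" using n unfolding inverse_eq_divide by linarith
      hence "\<omega> \<in> A n" unfolding A_def r_def using ws False x by simp
      thus ?thesis by blast
    qed
  qed
  have "(\<Union>n. A n) \<in> null_sets M" by (rule null_sets_UN) (rule An)
  hence "?B \<in> null_sets M" by (rule null_sets_subset[OF _ Bs sub])
  hence "emeasure M ?B = 0" by (rule null_setsD1)
  hence "measure M ?B = 0" by (simp add: measure_def)
  thus False using pos by simp
qed



lemma rho_pos_x0:
  assumes x0: "x0 = Inf (ereal ` {x. x > 0 \<and> \<rho> x = 0})" and y: "0 < y" "ereal y < x0"
  shows "\<rho> y > 0"
proof (rule ccontr)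
  assume "\<not> \<rho> y > 0"
  hence "\<rho> y = 0" using rho_nonneg[OF y(1)] by simp
  hence "x0 \<le> ereal y" unfolding x0 using y(1) by (intro Inf_lower) auto
  thus False using y(2) by simp
qed

lemma near_beta0:
  assumes x0: "x0 = Inf (ereal ` {x. x > 0 \<and> \<rho> x = 0})"
    and R: "0 \<le> R" "ereal R < x0" "0 < measure M {\<omega> \<in> space M. dist (Y \<omega>) m \<le> R}"
  shows "\<exists>\<delta> c2. 0 < \<delta> \<and> 0 < c2 \<and> (\<forall>q. dist q m < \<delta> \<longrightarrow> c2 * dist q m powr 2 \<le> F q - F m)"
proof -
  define \<delta> where "\<delta> = (if x0 = \<infinity> then 1 else (real_of_ereal x0 - R) / 2)"
  have x0nn: "0 \<le> x0" unfolding x0 by (rule Inf_greatest) auto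
  have dpos: "\<delta> > 0" and Zx0: "ereal (R + \<delta>) < x0"
  proof -
    show "\<delta> > 0"
    proof (cases "x0 = \<infinity>")
      case False
      then obtain x where "x0 = ereal x" using x0nn by (cases x0) auto
      thus ?thesis using False R by (simp add: \<delta>_def)
    qed (simp add: \<delta>_def)
    show "ereal (R + \<delta>) < x0"
    proof (cases "x0 = \<infinity>")
      case False
      then obtain x where "x0 = ereal x" using x0nn by (cases x0) auto
      thus ?thesis using False R by (simp add: \<delta>_def field_simps)
    qed (simp add: \<delta>_def)
  qed
  define Z where "Z = R + \<delta>"
  have Z: "Z > 0" using dpos R by (simp add: Z_def)
  have rZ: "\<rho> Z > 0" by (rule rho_pos_x0[OF x0 Z]) (use Zx0 in \<open>simp add: Z_def\<close>)
  define p where "p = measure M {\<omega> \<in> space M. dist (Y \<omega>) m \<le> R}"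
  show ?thesis
  proof (intro exI conjI allI impI)
    show "0 < \<delta>" by (rule dpos)
    show "0 < \<rho> Z * p / 4" using rZ R by (simp add: p_def)
    fix q assume q: "dist q m < \<delta>"
    have "\<rho> Z * (dist q m)\<^sup>2 / 4 * p \<le> F q - F m" unfolding p_def
      by (rule near_gen[OF Z R(1)]) (use q in \<open>simp add: Z_def\<close>)
    thus "\<rho> Z * p / 4 * dist q m powr 2 \<le> F q - F m" by (simp add: field_simps)
  qed
qed

lemma near_liminf:
  assumes L: "Liminf (at_right 0) (\<lambda>x. ereal (\<rho> (2 * x)
               * measure M {\<omega> \<in> space M. dist (Y \<omega>) m \<le> x} / x powr (- \<beta>))) > 0"
  shows "\<exists>\<delta> c2. 0 < \<delta> \<and> 0 < c2 \<and> (\<forall>q. dist q m < \<delta> \<longrightarrow> c2 * dist q m powr (2 - \<beta>) \<le> F q - F m)"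
proof -
  obtain \<epsilon> where e: "0 < ereal \<epsilon>" "ereal \<epsilon> < Liminf (at_right 0) (\<lambda>x. ereal (\<rho> (2 * x)
               * measure M {\<omega> \<in> space M. dist (Y \<omega>) m \<le> x} / x powr (- \<beta>)))"
    using ereal_dense2[OF L] by blast
  have epos: "\<epsilon> > 0" using e(1) by simp
  from less_LiminfD[OF e(2)]
  have "\<forall>\<^sub>F x in at_right 0. \<epsilon> < \<rho> (2 * x) * measure M {\<omega> \<in> space M. dist (Y \<omega>) m \<le> x} / x powr (- \<beta>)"
    by simp
  then obtain \<eta> where eta: "\<eta> > 0"
    "\<And>x. 0 < x \<Longrightarrow> x < \<eta> \<Longrightarrow> \<epsilon> < \<rho> (2 * x) * measure M {\<omega> \<in> space M. dist (Y \<omega>) m \<le> x} / x powr (- \<beta>)"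
    unfolding eventually_at_right_field by auto
  show ?thesis
  proof (intro exI conjI allI impI)
    show "0 < \<eta>" by (rule eta)
    show "0 < \<epsilon> / 4" using epos by simp
    fix q assume q: "dist q m < \<eta>"
    show "\<epsilon> / 4 * dist q m powr (2 - \<beta>) \<le> F q - F m"
    proof (cases "dist q m = 0")
      case True thus ?thesis using Fmin by simp
    next
      case False
      define D where "D = dist q m"
      have D: "D > 0" using False by (simp add: D_def)
      let ?P = "measure M {\<omega> \<in> space M. dist (Y \<omega>) m \<le> D}"
      have "\<epsilon> < \<rho> (2 * D) * ?P / D powr (- \<beta>)" using eta(2)[OF D] q by (simp add: D_def)
      hence 1: "\<epsilon> * D powr (- \<beta>) \<le> \<rho> (2 * D) * ?P" using D by (simp add: field_simps)
      have 2: "\<rho> (2 * D) * D\<^sup>2 / 4 * ?P \<le> F q - F m"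
        unfolding D_def by (rule near_gen) (use D in \<open>auto simp: D_def\<close>)
      have "D powr (2 - \<beta>) = D powr (2 + (- \<beta>))" by simp
      also have "\<dots> = D powr 2 * D powr (- \<beta>)" by (rule powr_add)
      also have "D powr 2 = D\<^sup>2" using D by simp
      finally have "D powr (2 - \<beta>) = D\<^sup>2 * D powr (- \<beta>)" .
      hence "\<epsilon> / 4 * D powr (2 - \<beta>) = (\<epsilon> * D powr (- \<beta>)) * D\<^sup>2 / 4" by simp
      also have "\<dots> \<le> (\<rho> (2 * D) * ?P) * D\<^sup>2 / 4" using 1 by (intro divide_right_mono mult_right_mono) auto
      also have "\<dots> \<le> F q - F m" using 2 by (simp add: field_simps)
      finally show ?thesis by (simp add: D_def)
    qed
  qed
qed

end


context main_loc
begin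

interpretation prob_space M by (rule P)

definition ch :: "'a \<Rightarrow> nat \<Rightarrow> 'a" where "ch q j = (mid m ^^ j) q"

lemma ch_Suc: "ch q (Suc j) = mid m (ch q j)" by (simp add: ch_def)
lemma ch_0: "ch q 0 = q" by (simp add: ch_def)
lemma ch_dist: "dist m (ch q j) = dist q m / 2^j"
  by (induction j) (simp_all add: ch_0 ch_Suc mid_dist(1)[OF H] dist_commute)

lemma tele: "F q - F m = 2^k * (F (ch q k) - F m)
   + (\<Sum>j<k. 2^j * (F m + F (ch q j) - 2 * F (ch q (Suc j))))"
  by (induction k) (simp_all add: ch_0 algebra_simps)

lemma Kj_low:
  assumes R: "0 \<le> R"
  shows "measure M {\<omega> \<in> space M. dist (Y \<omega>) m \<le> R} *
     (\<tau> (dist m x) - 2 * \<tau> (dist m x / 2) - R * (3 * g (dist m x) + 2 * g R))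
     \<le> F m + F x - 2 * F (mid m x)"
proof (cases "\<tau> (dist m x) - 2 * \<tau> (dist m x / 2) - R * (3 * g (dist m x) + 2 * g R) < 0")
  case True
  hence "measure M {\<omega> \<in> space M. dist (Y \<omega>) m \<le> R} *
     (\<tau> (dist m x) - 2 * \<tau> (dist m x / 2) - R * (3 * g (dist m x) + 2 * g R)) \<le> 0"
    by (intro mult_nonneg_nonpos) auto
  thus ?thesis using F_mid_nonneg[of x] by linarith
next
  case False
  let ?E = "dist m x"
  let ?L = "\<tau> (dist m x) - 2 * \<tau> (dist m x / 2) - R * (3 * g (dist m x) + 2 * g R)"
  have "?L * measure M {\<omega> \<in> space M. dist (Y \<omega>) m \<le> R} \<le> F m + F x - 2 * F (mid m x)"
  proof (rule K_lower[OF K_nonneg])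
    show "0 \<le> ?L" using False by simp
    fix \<omega> assume a: "dist (Y \<omega>) m \<le> R"
    let ?a = "dist (Y \<omega>) m" and ?b = "dist (Y \<omega>) x" and ?c = "dist (Y \<omega>) (mid m x)"
    have "?E \<le> ?a + ?b" by (metis dist_commute dist_triangle)
    hence b: "?E - R \<le> ?b" using a by linarith
    have 1: "\<tau> ?E - g ?E * R \<le> \<tau> ?b" by (rule tau_low) (use b R in auto)
    have "?c \<le> ?a + dist m (mid m x)" by (rule dist_triangle)
    hence c: "?c \<le> ?E / 2 + R" using a mid_dist(1)[OF H, of m x] by simp
    have 2: "\<tau> ?c \<le> \<tau> (?E / 2 + R)" by (rule tau_mono) (use c in auto)
    have 3: "\<tau> (?E / 2 + R) - \<tau> (?E / 2) \<le> g (?E / 2 + R) * (?E / 2 + R - ?E / 2)"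
      by (rule tau_up) (use R in auto)
    have 4: "g (?E / 2 + R) \<le> g (?E / 2) + g R" by (rule g_subadd) (use R in auto)
    have 5: "g (?E / 2) \<le> g ?E" by (rule g_mono) auto
    have 6: "0 \<le> \<tau> ?a" by (rule tau_nonneg) auto
    have "g (?E / 2 + R) * R \<le> (g ?E + g R) * R" using 4 5 R by (intro mult_right_mono) auto
    hence 7: "\<tau> ?c \<le> \<tau> (?E / 2) + g ?E * R + g R * R" using 2 3 by (simp add: algebra_simps)
    have eq: "R * (3 * g ?E + 2 * g R) = 3 * (g ?E * R) + 2 * (g R * R)" by (simp add: algebra_simps)
    show "?L \<le> \<tau> ?a + \<tau> ?b - 2 * \<tau> ?c" unfolding eq using 1 6 7 by linarith
  qed
  thus ?thesis by (simp add: mult.commute)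
qed

lemma far_low:
  assumes dpos: "0 < \<delta>" and c2: "0 < c2" and beta: "\<beta> \<le> 2"
    and near: "\<forall>q. dist q m < \<delta> \<longrightarrow> c2 * dist q m powr (2 - \<beta>) \<le> F q - F m"
    and R: "0 \<le> R" and ppos: "0 < measure M {\<omega> \<in> space M. dist (Y \<omega>) m \<le> R}"
  shows "\<exists>c4>0. \<forall>q. \<delta> \<le> dist q m \<longrightarrow> c4 * \<tau> (dist q m) \<le> F q - F m"
proof -
  define p where "p = measure M {\<omega> \<in> space M. dist (Y \<omega>) m \<le> R}"
  have p: "0 < p" using ppos by (simp add: p_def)
  obtain L :: nat where L: "24 * R / \<delta> < 2^L" using real_arch_pow[of 2 "24 * R / \<delta>"] by auto
  define C0 where "C0 = 2 / \<delta> * (\<tau> \<delta> + 3 * R * g (2^L * \<delta>) + 2 * R * g R)"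
  define c5 where "c5 = c2 * (\<delta> / 2) powr (2 - \<beta>)"
  have c5: "c5 > 0" using c2 dpos by (simp add: c5_def)
  have C0: "C0 \<ge> 0" unfolding C0_def using dpos R tau_nonneg[of \<delta>] g_nonneg[of R] g_nonneg[of "2^L * \<delta>"]
    by (intro mult_nonneg_nonneg add_nonneg_nonneg) auto
  define c0 where "c0 = c5 / \<delta>"
  have c0: "c0 > 0" using c5 dpos by (simp add: c0_def)
  define c4 where "c4 = (p / 2) / (1 + p * C0 / c0)"
  have den: "1 + p * C0 / c0 > 0" using p C0 c0 by (smt (verit) divide_nonneg_pos mult_nonneg_nonneg)
  show ?thesis
  proof (intro exI conjI allI impI)
    show "c4 > 0" using p den by (simp add: c4_def)
    fix q assume qd: "\<delta> \<le> dist q m"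
    define D where "D = dist q m"
    have Dpos: "D > 0" unfolding D_def using qd dpos by linarith
    obtain n where "D / \<delta> < 2^n" using real_arch_pow[of 2 "D / \<delta>"] by auto
    hence "D / 2^n < \<delta>" using dpos by (simp add: field_simps)
    hence ex: "\<exists>n. D / 2^n < \<delta>" by blast
    define k where "k = (LEAST n. D / 2^n < \<delta>)"
    have hk: "D / 2^k < \<delta>" unfolding k_def by (rule LeastI_ex[OF ex])
    have k0: "k \<noteq> 0"
    proof
      assume "k = 0"
      with hk have "D < \<delta>" by simp
      with qd show False by (simp add: D_def)
    qed
    have hk1: "\<not> D / 2^(k-1) < \<delta>" unfolding k_def
      by (rule not_less_Least) (use k0 in \<open>simp add: k_def\<close>)
    have pk: "(2::real)^k = 2 * 2^(k-1)" using k0 by (cases k) auto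
    have "\<delta> * 2^(k-1) \<le> D" using hk1 by (simp add: field_simps)
    hence Ek: "2^k \<le> 2 * D / \<delta>" using dpos pk by (simp add: field_simps)
    have Ek2: "D / \<delta> < 2^k" using hk dpos by (simp add: field_simps)
    have hk2: "\<delta> / 2 \<le> D / 2^k" using hk1 pk by (simp add: field_simps)
    have chd: "dist (ch q j) m = D / 2^j" for j using ch_dist[of q j] by (simp add: dist_commute D_def)
    define K where "K j = F m + F (ch q j) - 2 * F (ch q (Suc j))" for j
    have tel: "F q - F m = 2^k * (F (ch q k) - F m) + (\<Sum>j<k. 2^j * K j)"
      unfolding K_def by (rule tele)
    have Knn: "0 \<le> K j" for j using F_mid_nonneg[of "ch q j"] by (simp add: K_def ch_Suc)
    have sum_nn: "0 \<le> (\<Sum>j<k. 2^j * K j)" using Knn by (intro sum_nonneg) simp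
    have nk: "c2 * (D / 2^k) powr (2 - \<beta>) \<le> F (ch q k) - F m" using near[rule_format, of "ch q k"] chd[of k] hk by simp
    have "(\<delta> / 2) powr (2 - \<beta>) \<le> (D / 2^k) powr (2 - \<beta>)"
      by (rule powr_mono2) (use beta dpos hk2 in auto)
    hence "c5 \<le> F (ch q k) - F m" using nk c2 unfolding c5_def by (smt (verit) mult_left_mono)
    hence "2^k * c5 \<le> 2^k * (F (ch q k) - F m)" by simp
    moreover have "D / \<delta> * c5 \<le> 2^k * c5" using Ek2 c5 by (intro mult_right_mono) auto
    ultimately have lin: "c0 * D \<le> F q - F m" using tel sum_nn by (simp add: c0_def field_simps)
    define Lj where "Lj j = \<tau> (D / 2^j) - 2 * \<tau> (D / 2^(Suc j)) - R * (3 * g (D / 2^j) + 2 * g R)" for j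
    have KL: "p * Lj j \<le> K j" for j
    proof -
      have "p * (\<tau> (dist m (ch q j)) - 2 * \<tau> (dist m (ch q j) / 2) - R * (3 * g (dist m (ch q j)) + 2 * g R))
         \<le> F m + F (ch q j) - 2 * F (mid m (ch q j))" unfolding p_def by (rule Kj_low[OF R])
      thus ?thesis using chd[of j] by (simp add: K_def Lj_def ch_Suc dist_commute mult.commute)
    qed
    define SG where "SG = (\<Sum>j<k. 2^j * g (D / 2^j))"
    define S1 where "S1 = (\<Sum>j<k. (2::real)^j)"
    have sumL: "(\<Sum>j<k. 2^j * Lj j) = \<tau> D - 2^k * \<tau> (D / 2^k) - 3 * R * SG - 2 * R * g R * S1"
    proof -
      have "(\<Sum>j<k. 2^j * Lj j) = (\<Sum>j<k. (2^j * \<tau> (D / 2^j) - 2^(Suc j) * \<tau> (D / 2^(Suc j)))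
             - 3 * R * (2^j * g (D / 2^j)) - 2 * R * g R * 2^j)"
        by (rule sum.cong) (simp_all add: Lj_def algebra_simps)
      also have "\<dots> = (\<Sum>j<k. (2^j * \<tau> (D / 2^j) - 2^(Suc j) * \<tau> (D / 2^(Suc j))))
             - 3 * R * SG - 2 * R * g R * S1"
        by (simp add: sum_subtractf sum_distrib_left SG_def S1_def)
      also have "(\<Sum>j<k. (2^j * \<tau> (D / 2^j) - 2^(Suc j) * \<tau> (D / 2^(Suc j)))) = \<tau> D - 2^k * \<tau> (D / 2^k)"
        using sum_lessThan_telescope'[of "\<lambda>j. 2^j * \<tau> (D / 2^j)" k] by simp
      finally show ?thesis .
    qed
    have sumK: "p * (\<Sum>j<k. 2^j * Lj j) \<le> (\<Sum>j<k. 2^j * K j)"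
      unfolding sum_distrib_left using KL
      by (intro sum_mono) (smt (verit) mult.left_commute mult_left_mono zero_le_power)
    have a: "2^k * \<tau> (D / 2^k) \<le> 2 * D / \<delta> * \<tau> \<delta>"
    proof -
      have "\<tau> (D / 2^k) \<le> \<tau> \<delta>" by (rule tau_mono) (use hk Dpos in auto)
      thus ?thesis using Ek tau_nonneg[of "D / 2^k"] Dpos dpos by (intro mult_mono) auto
    qed
    have S1: "S1 \<le> 2 * D / \<delta>" using Ek by (simp add: S1_def geo)
    have S1': "S1 \<le> 2^k" by (simp add: S1_def geo)
    have SG: "SG \<le> 2^k / 2^L * g D + 2^k * g (2^L * \<delta>)"
    proof -
      have "SG \<le> (\<Sum>j<k. (if j + L < k then (2::real)^j else 0) * g D + 2^j * g (2^L * \<delta>))"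
        unfolding SG_def
      proof (rule sum_mono)
        fix j assume j: "j \<in> {..<k}"
        show "2^j * g (D / 2^j) \<le> (if j + L < k then (2::real)^j else 0) * g D + 2^j * g (2^L * \<delta>)"
        proof (cases "j + L < k")
          case True
          have "g (D / 2^j) \<le> g D" by (rule g_mono) (use Dpos in \<open>auto simp: divide_le_eq\<close>)
          moreover have "0 \<le> g (2^L * \<delta>)" using g_nonneg dpos by simp
          ultimately have "g (D / 2^j) \<le> g D + g (2^L * \<delta>)" by linarith
          hence "2^j * g (D / 2^j) \<le> 2^j * (g D + g (2^L * \<delta>))" by (rule mult_left_mono) simp
          hence "2^j * g (D / 2^j) \<le> 2^j * g D + 2^j * g (2^L * \<delta>)" by (simp add: distrib_left)
          thus ?thesis using True by simp
        next
          case False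
          have "(2::real)^k \<le> 2^(j + L)" by (rule power_increasing) (use False in auto)
          hence pw: "\<delta> * 2^k \<le> \<delta> * 2^(j + L)" using dpos by simp
          have "D < 2^k * \<delta>" using Ek2 dpos by (simp add: divide_less_eq)
          hence "D < \<delta> * 2^(j + L)" using pw by (simp add: mult.commute)
          hence "D < (2^L * \<delta>) * 2^j" by (simp add: power_add mult_ac)
          hence "D / 2^j < 2^L * \<delta>" by (simp add: divide_less_eq)
          hence "D / 2^j \<le> 2^L * \<delta>" by simp
          hence "g (D / 2^j) \<le> g (2^L * \<delta>)" by (intro g_mono) (use Dpos in auto)
          thus ?thesis using False by simp
        qed
      qed
      also have "\<dots> = (\<Sum>j<k. if j + L < k then (2::real)^j else 0) * g D + S1 * g (2^L * \<delta>)"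
        by (simp add: sum.distrib sum_distrib_right S1_def)
      also have "\<dots> \<le> 2^k / 2^L * g D + 2^k * g (2^L * \<delta>)"
        using geo_if[where k=k and L=L] S1' g_nonneg[of D] g_nonneg[of "2^L * \<delta>"] Dpos dpos
        by (intro add_mono mult_right_mono) auto
      finally show ?thesis .
    qed
    have d: "D * g D \<le> 2 * \<tau> D" using tau_half Dpos by simp
    have SG2: "3 * R * SG \<le> 6 * R / (\<delta> * 2^L) * (D * g D) + 3 * R * (2 * D / \<delta>) * g (2^L * \<delta>)"
    proof -
      have "3 * R * SG \<le> 3 * R * (2^k / 2^L * g D + 2^k * g (2^L * \<delta>))"
        using SG R by (intro mult_left_mono) auto
      also have "\<dots> \<le> 3 * R * (2 * D / \<delta> / 2^L * g D + 2 * D / \<delta> * g (2^L * \<delta>))"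
      proof -
        have e1: "2^k / 2^L * g D \<le> 2 * D / \<delta> / 2^L * g D"
          by (rule mult_right_mono[OF divide_right_mono[OF Ek]]) (use g_nonneg[of D] Dpos in auto)
        have e2: "2^k * g (2^L * \<delta>) \<le> 2 * D / \<delta> * g (2^L * \<delta>)"
          by (rule mult_right_mono[OF Ek]) (use g_nonneg[of "2^L * \<delta>"] dpos in auto)
        show ?thesis by (rule mult_left_mono[OF add_mono[OF e1 e2]]) (use R in auto)
      qed
      also have "\<dots> = 6 * R / (\<delta> * 2^L) * (D * g D) + 3 * R * (2 * D / \<delta>) * g (2^L * \<delta>)"
        by (simp add: field_simps)
      finally show ?thesis .
    qed
    have Lsmall: "6 * R / (\<delta> * 2^L) * (D * g D) \<le> \<tau> D / 2"
    proof -
      have "6 * R / (\<delta> * 2^L) * (D * g D) \<le> 6 * R / (\<delta> * 2^L) * (2 * \<tau> D)"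
        using d R dpos by (intro mult_left_mono) auto
      also have "\<dots> = (12 * R / (\<delta> * 2^L)) * \<tau> D" by simp
      also have "\<dots> \<le> 1/2 * \<tau> D"
      proof (rule mult_right_mono)
        show "12 * R / (\<delta> * 2^L) \<le> 1/2" using L dpos by (simp add: field_simps)
        show "0 \<le> \<tau> D" using tau_nonneg Dpos by simp
      qed
      finally show ?thesis by simp
    qed
    have gRS1: "2 * R * g R * S1 \<le> 2 * R * g R * (2 * D / \<delta>)"
      using S1 R g_nonneg[of R] by (intro mult_left_mono) auto
    have "(\<Sum>j<k. 2^j * Lj j) \<ge> \<tau> D / 2 - D * C0"
    proof -
      have "D * C0 = 2 * D / \<delta> * \<tau> \<delta> + 3 * R * (2 * D / \<delta>) * g (2^L * \<delta>) + 2 * R * g R * (2 * D / \<delta>)"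
        unfolding C0_def by (simp add: algebra_simps)
      thus ?thesis using sumL a SG2 Lsmall gRS1 by linarith
    qed
    hence "p * (\<tau> D / 2 - D * C0) \<le> p * (\<Sum>j<k. 2^j * Lj j)"
      using p by (intro mult_left_mono) auto
    also have "\<dots> \<le> (\<Sum>j<k. 2^j * K j)" by (rule sumK)
    finally have s1: "p * (\<tau> D / 2 - D * C0) \<le> (\<Sum>j<k. 2^j * K j)" .
    have "0 \<le> 2^k * c5" using c5 by simp
    hence sup: "p * (\<tau> D / 2 - D * C0) \<le> F q - F m"
      using s1 tel \<open>2^k * c5 \<le> 2^k * (F (ch q k) - F m)\<close> by linarith
    have "(F q - F m) * (1 + p * C0 / c0) \<ge> p * \<tau> D / 2"
    proof -
      have "(F q - F m) * (1 + p * C0 / c0) = (F q - F m) + p * C0 / c0 * (F q - F m)"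
        by (simp add: algebra_simps)
      also have "p * C0 / c0 * (F q - F m) \<ge> p * C0 / c0 * (c0 * D)"
        using lin p C0 c0 by (intro mult_left_mono) auto
      moreover have "p * C0 / c0 * (c0 * D) = p * C0 * D" using c0 by simp
      ultimately show ?thesis using sup by (simp add: algebra_simps)
    qed
    hence "p * \<tau> D / 2 \<le> (F q - F m) * (1 + p * C0 / c0)" by simp
    hence "p * \<tau> D / 2 / (1 + p * C0 / c0) \<le> F q - F m"
      by (simp only: pos_divide_le_eq[OF den])
    moreover have "c4 * \<tau> (dist q m) = p * \<tau> D / 2 / (1 + p * C0 / c0)"
      by (simp add: c4_def D_def)
    ultimately show "c4 * \<tau> (dist q m) \<le> F q - F m" by simp
  qed
qed

end


theorem mainTheorem8:
  fixes M :: "'w measure" and Y :: "'w \<Rightarrow> 'a::{metric_space, complete_space}"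
    and ob m :: 'a and \<tau> :: "real \<Rightarrow> real" and \<beta> :: real and x0 :: ereal
  assumes "prob_space M"
    and "hadamard TYPE('a)"
    and "Y \<in> measurable M borel"
    and "\<tau> \<in> S0plus"
    and "integrable M (\<lambda>\<omega>. tau' \<tau> (dist (Y \<omega>) ob))"
    and "\<forall>q. (\<integral>\<omega>. \<tau> (dist (Y \<omega>) m) - \<tau> (dist (Y \<omega>) ob) \<partial>M)
             \<le> (\<integral>\<omega>. \<tau> (dist (Y \<omega>) q) - \<tau> (dist (Y \<omega>) ob) \<partial>M)"
    and "x0 = Inf (ereal ` {x. x > 0 \<and> rderiv (tau' \<tau>) x = 0})"
    and "measure M {\<omega> \<in> space M. ereal (dist (Y \<omega>) m) < x0} > 0"
    and "\<beta> = 0 \<or> (0 \<le> \<beta> \<and> \<beta> < 1 \<and>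
           Liminf (at_right 0) (\<lambda>x. ereal (rderiv (tau' \<tau>) (2 * x)
               * measure M {\<omega> \<in> space M. dist (Y \<omega>) m \<le> x} / x powr (- \<beta>))) > 0)"
  shows "\<exists>c1 c2 c3 c4 \<delta>. c1 > 0 \<and> c2 > 0 \<and> c3 > 0 \<and> c4 > 0 \<and> \<delta> > 0 \<and>
     (\<forall>q. dist q m < \<delta> \<longrightarrow>
        c1 * dist q m \<ge> (\<integral>\<omega>. \<tau> (dist (Y \<omega>) q) - \<tau> (dist (Y \<omega>) m) \<partial>M) \<and>
        (\<integral>\<omega>. \<tau> (dist (Y \<omega>) q) - \<tau> (dist (Y \<omega>) m) \<partial>M) \<ge> c2 * dist q m powr (2 - \<beta>)) \<and>
     (\<forall>q. dist q m \<ge> \<delta> \<longrightarrow>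
        c3 * \<tau> (dist q m) \<ge> (\<integral>\<omega>. \<tau> (dist (Y \<omega>) q) - \<tau> (dist (Y \<omega>) m) \<partial>M) \<and>
        (\<integral>\<omega>. \<tau> (dist (Y \<omega>) q) - \<tau> (dist (Y \<omega>) m) \<partial>M) \<ge> c4 * \<tau> (dist q m))"
proof -
  interpret tau_loc \<tau> by (rule tau_loc.intro) (rule assms(4))
  have ax: "main_loc_axioms \<tau> M Y ob m"
    unfolding main_loc_axioms_def by (intro conjI assms(1) assms(2) assms(3) assms(5) assms(6))
  interpret main_loc \<tau> M Y ob m by (rule main_loc.intro[OF tau_loc_axioms ax])
  obtain R where R: "0 \<le> R" "ereal R < x0" "0 < measure M {\<omega> \<in> space M. dist (Y \<omega>) m \<le> R}"
    using exR[OF assms(7) assms(8)] by blast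
  have beta: "\<beta> \<le> 2" using assms(9) by auto
  obtain \<delta> c2 where dc: "0 < \<delta>" "0 < c2"
    and near: "\<forall>q. dist q m < \<delta> \<longrightarrow> c2 * dist q m powr (2 - \<beta>) \<le> F q - F m"
  proof (cases "\<beta> = 0")
    case True
    from near_beta0[OF assms(7) R] obtain \<delta> c2 where
      "0 < \<delta>" "0 < c2" "\<forall>q. dist q m < \<delta> \<longrightarrow> c2 * dist q m powr 2 \<le> F q - F m" by blast
    thus ?thesis using that True by simp
  next
    case False
    hence "Liminf (at_right 0) (\<lambda>x. ereal (\<rho> (2 * x)
               * measure M {\<omega> \<in> space M. dist (Y \<omega>) m \<le> x} / x powr (- \<beta>))) > 0"
      using assms(9) by blast
    from near_liminf[OF this] obtain \<delta> c2 where
      "0 < \<delta>" "0 < c2" "\<forall>q. dist q m < \<delta> \<longrightarrow> c2 * dist q m powr (2 - \<beta>) \<le> F q - F m" by blast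
    thus ?thesis using that by blast
  qed
  obtain c4 where c4: "c4 > 0" and far: "\<forall>q. \<delta> \<le> dist q m \<longrightarrow> c4 * \<tau> (dist q m) \<le> F q - F m"
    using far_low[OF dc(1) dc(2) beta near R(1) R(3)] by blast
  define c1 where "c1 = Ga + g \<delta> + 1"
  define c3 where "c3 = Ga * \<delta> / \<tau> \<delta> + 2"
  have Ga: "0 \<le> Ga" by (rule Ga_nonneg)
  have tpos: "\<tau> \<delta> > 0" using tau_pos dc by simp
  have gd: "0 \<le> g \<delta>" using g_nonneg dc by simp
  show ?thesis
  proof (intro exI conjI allI impI)
    show "c1 > 0" using Ga gd by (simp add: c1_def)
    show "c2 > 0" by (rule dc)
    have "0 \<le> Ga * \<delta> / \<tau> \<delta>" using Ga tpos dc by simp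
    thus "c3 > 0" by (simp add: c3_def)
    show "c4 > 0" by (rule c4)
    show "\<delta> > 0" by (rule dc)
    fix q
    {
      assume q: "dist q m < \<delta>"
      have "F q - F m \<le> dist q m * (Ga + g (dist q m))" by (rule upper)
      also have "\<dots> \<le> dist q m * c1"
        using g_mono[of "dist q m" \<delta>] q by (intro mult_left_mono) (auto simp: c1_def)
      finally show "(\<integral>\<omega>. \<tau> (dist (Y \<omega>) q) - \<tau> (dist (Y \<omega>) m) \<partial>M) \<le> c1 * dist q m"
        by (simp add: F_diff mult.commute)
      show "c2 * dist q m powr (2 - \<beta>) \<le> (\<integral>\<omega>. \<tau> (dist (Y \<omega>) q) - \<tau> (dist (Y \<omega>) m) \<partial>M)"
        using near q by (simp add: F_diff)
    }
    {
      assume q: "\<delta> \<le> dist q m"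
      let ?D = "dist q m"
      have Dp: "?D > 0" using q dc by linarith
      have "\<tau> \<delta> \<le> \<delta> / ?D * \<tau> ?D" by (rule tau_ratio) (use dc q in auto)
      hence "?D * \<tau> \<delta> \<le> \<delta> * \<tau> ?D" using Dp by (simp add: field_simps)
      hence Dle: "?D \<le> \<delta> * \<tau> ?D / \<tau> \<delta>" using tpos by (simp add: field_simps)
      have "F q - F m \<le> ?D * (Ga + g ?D)" by (rule upper)
      also have "\<dots> = ?D * Ga + ?D * g ?D" by (simp add: algebra_simps)
      also have "\<dots> \<le> (\<delta> * \<tau> ?D / \<tau> \<delta>) * Ga + 2 * \<tau> ?D"
        using Dle Ga tau_half[of ?D] by (intro add_mono mult_right_mono) auto
      also have "\<dots> = c3 * \<tau> ?D" by (simp add: c3_def field_simps)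
      finally show "(\<integral>\<omega>. \<tau> (dist (Y \<omega>) q) - \<tau> (dist (Y \<omega>) m) \<partial>M) \<le> c3 * \<tau> (dist q m)"
        by (simp add: F_diff)
      show "c4 * \<tau> (dist q m) \<le> (\<integral>\<omega>. \<tau> (dist (Y \<omega>) q) - \<tau> (dist (Y \<omega>) m) \<partial>M)"
        using far q by (simp add: F_diff)
    }
  qed
qed


end
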